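(* Let $\vec n\in\mathbb{R}^9$ with $\sum_i n(i)=0$ and $\sum_i n(i)^2=1$, and for $r\ge0$ let $\rho_r=\sum_i[4p_r(i)-\frac13]\Pi_i$ with $p_r(i)=\frac19+r\,n(i)$. The set of $r\ge0$ for which $\rho_r$ is a density operator is an interval $[0,r(\vec n)]$, where $r(\vec n)$ is the smallest positive root of $4r^3F(\vec n)-r^2+\frac1{54}=0$. In particular $r(\vec n)=\frac1{3\sqrt6}$ when $F(\vec n)=0$, $r(\vec n)=\frac1{3\sqrt2}$ when $F(\vec n)=\frac1{\sqrt2}$, $r(\vec n)=\frac1{6\sqrt2}$ when $F(\vec n)=-\frac1{\sqrt2}$, and for all such $\vec n$, $$\frac1{6\sqrt2}\le r(\vec n)\le\frac1{3\sqrt2}.$$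
   Context: Let $\omega=e^{2\pi i/3}$, standard basis $|0\rangle,|1\rangle,|2\rangle$ of $\mathbb{C}^3$, $X|j\rangle=|j+1\bmod 3\rangle$, $Z|j\rangle=\omega^j|j\rangle$, $|\psi_0\rangle=\frac1{\sqrt2}(0,1,-1)^T$; for $m,n\in\{0,1,2\}$ and $i=3m+n+1$, $\Pi_i$ is the projector onto $X^mZ^n|\psi_0\rangle$ (the canonical Hesse SIC), so $p_r(i)=\frac13\operatorname{Tr}(\rho_r\Pi_i)$. Identify index $i=3m+n+1$ with $(m,n)\in\mathbb{Z}_3^2$; the 12 affine lines are $\{1,2,3\},\{4,5,6\},\{7,8,9\},\{1,4,7\},\{2,5,8\},\{3,6,9\},\{1,5,9\},\{2,6,7\},\{3,4,8\},\{1,6,8\},\{2,4,9\},\{3,5,7\}$, and $Q$ is the set of ordered triples $(i,j,k)$ of pairwise distinct indices with $\{i,j,k\}$ a line. For $v\in\mathbb{R}^9$ define $F(v)=\sum_i v(i)^3-\frac12\sum_{(i,j,k)\in Q}v(i)v(j)v(k)$. *)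

theory Defs
  imports Complex_Main
begin

text \<open>Dimension 3: vectors in C^3 and 3x3 matrices are represented as functions
  on nat indices, only indices 0,1,2 being relevant.\<close>

definition omega :: complex where
  "omega = cis (2 * pi / 3)"

text \<open>Shift X|j> = |j+1 mod 3>, i.e. (X v)_j = v_{j-1 mod 3}; clock Z|j> = omega^j |j>.\<close>
definition Xop :: "(nat \<Rightarrow> complex) \<Rightarrow> nat \<Rightarrow> complex" where
  "Xop v j = v ((j + 2) mod 3)"

definition Zop :: "(nat \<Rightarrow> complex) \<Rightarrow> nat \<Rightarrow> complex" where
  "Zop v j = omega ^ j * v j"

definition psi0 :: "nat \<Rightarrow> complex" where
  "psi0 j = (if j = 1 then 1 / complex_of_real (sqrt 2)
             else if j = 2 then - 1 / complex_of_real (sqrt 2) else 0)"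

definition sic_vec :: "nat \<Rightarrow> nat \<Rightarrow> nat \<Rightarrow> complex" where
  "sic_vec m n = (Xop ^^ m) ((Zop ^^ n) psi0)"

text \<open>Projector Pi_i onto X^m Z^n psi0, where i = 3m+n+1, i in {1..9}.\<close>
definition Proj :: "nat \<Rightarrow> nat \<Rightarrow> nat \<Rightarrow> complex" where
  "Proj i a b = (let v = sic_vec ((i - 1) div 3) ((i - 1) mod 3) in v a * cnj (v b))"

text \<open>The 12 affine lines of Z_3^2 (indices 1..9) and the ordered triples Q.\<close>
definition lines :: "nat set set" where
  "lines = {{1,2,3},{4,5,6},{7,8,9},{1,4,7},{2,5,8},{3,6,9},{1,5,9},{2,6,7},{3,4,8},
            {1,6,8},{2,4,9},{3,5,7}}"

definition Qtrip :: "(nat \<times> nat \<times> nat) set" where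
  "Qtrip = {(i,j,k). i \<noteq> j \<and> j \<noteq> k \<and> i \<noteq> k \<and> {i,j,k} \<in> lines}"

definition Ffun :: "(nat \<Rightarrow> real) \<Rightarrow> real" where
  "Ffun v = (\<Sum>i\<in>{1..9}. v i ^ 3) - 1/2 * (\<Sum>(i,j,k)\<in>Qtrip. v i * v j * v k)"

definition prob :: "(nat \<Rightarrow> real) \<Rightarrow> real \<Rightarrow> nat \<Rightarrow> real" where
  "prob nv r i = 1/9 + r * nv i"

definition rho :: "(nat \<Rightarrow> real) \<Rightarrow> real \<Rightarrow> nat \<Rightarrow> nat \<Rightarrow> complex" where
  "rho nv r a b = (\<Sum>i\<in>{1..9}. complex_of_real (4 * prob nv r i - 1/3) * Proj i a b)"

definition density_op :: "(nat \<Rightarrow> nat \<Rightarrow> complex) \<Rightarrow> bool" where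
  "density_op A \<longleftrightarrow>
     (\<forall>a<3. \<forall>b<3. A a b = cnj (A b a)) \<and>
     (\<forall>x :: nat \<Rightarrow> complex. 0 \<le> Re (\<Sum>a<3. \<Sum>b<3. cnj (x a) * A a b * x b)) \<and>
     (\<Sum>a<3. A a a) = 1"

end

theory Submission
  imports Defs
begin


definition QR :: "real\<Rightarrow>real\<Rightarrow>real\<Rightarrow>real\<Rightarrow>real\<Rightarrow>real\<Rightarrow>real\<Rightarrow>real\<Rightarrow>real\<Rightarrow>real\<Rightarrow>real\<Rightarrow>real\<Rightarrow>real\<Rightarrow>real\<Rightarrow>real\<Rightarrow>real" where
 "QR d0 d1 d2 u1 u2 v1 v2 w1 w2 a0 b0 a1 b1 a2 b2 =
   d0*(a0^2+b0^2) + d1*(a1^2+b1^2) + d2*(a2^2+b2^2)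
   + 2*(u1*(a0*a1+b0*b1) - u2*(a0*b1 - b0*a1))
   + 2*(v1*(a0*a2+b0*b2) - v2*(a0*b2 - b0*a2))
   + 2*(w1*(a1*a2+b1*b2) - w2*(a1*b2 - b1*a2))"

definition QR2 :: "real\<Rightarrow>real\<Rightarrow>real\<Rightarrow>real\<Rightarrow>real\<Rightarrow>real\<Rightarrow>real\<Rightarrow>real\<Rightarrow>real" where
 "QR2 p s q1 q2 a1 b1 a2 b2 = p*(a1^2+b1^2) + s*(a2^2+b2^2) + 2*(q1*(a1*a2+b1*b2) - q2*(a1*b2 - b1*a2))"

definition E2R :: "real\<Rightarrow>real\<Rightarrow>real\<Rightarrow>real\<Rightarrow>real\<Rightarrow>real\<Rightarrow>real\<Rightarrow>real\<Rightarrow>real\<Rightarrow>real" where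
 "E2R d0 d1 d2 u1 u2 v1 v2 w1 w2 = (d0*d1 - (u1^2+u2^2)) + (d0*d2 - (v1^2+v2^2)) + (d1*d2 - (w1^2+w2^2))"

definition DR :: "real\<Rightarrow>real\<Rightarrow>real\<Rightarrow>real\<Rightarrow>real\<Rightarrow>real\<Rightarrow>real\<Rightarrow>real\<Rightarrow>real\<Rightarrow>real" where
 "DR d0 d1 d2 u1 u2 v1 v2 w1 w2 = d0*d1*d2 + 2*((u1*w1 - u2*w2)*v1 + (u1*w2 + u2*w1)*v2)
    - d0*(w1^2+w2^2) - d1*(v1^2+v2^2) - d2*(u1^2+u2^2)"

lemma QR2_nonneg:
  assumes "p \<ge> 0" "s \<ge> 0" "p*s \<ge> q1^2+q2^2"
  shows "QR2 p s q1 q2 a1 b1 a2 b2 \<ge> 0"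
proof (cases "p > 0")
  case True
  have "p * QR2 p s q1 q2 a1 b1 a2 b2 = (p*a1 + q1*a2 - q2*b2)^2 + (p*b1 + q1*b2 + q2*a2)^2
          + (p*s - (q1^2+q2^2))*(a2^2+b2^2)"
    unfolding QR2_def by algebra
  also have "\<dots> \<ge> 0" using assms by (intro add_nonneg_nonneg mult_nonneg_nonneg) auto
  finally show ?thesis using True by (simp add: zero_le_mult_iff)
next
  case False
  then have "p = 0" using assms by auto
  then have "q1^2+q2^2 \<le> 0" using assms by simp
  then have "q1^2 = 0" "q2^2 = 0" using zero_le_power2[of q1] zero_le_power2[of q2] by linarith+
  then have "q1 = 0" "q2 = 0" by auto
  then show ?thesis using \<open>p=0\<close> assms unfolding QR2_def by simp
qed

lemma piv0:
  assumes "d0 > 0" "d0*d1 - (u1^2+u2^2) \<ge> 0" "d0*d2 - (v1^2+v2^2) \<ge> 0"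
    "DR d0 d1 d2 u1 u2 v1 v2 w1 w2 \<ge> 0"
  shows "QR d0 d1 d2 u1 u2 v1 v2 w1 w2 a0 b0 a1 b1 a2 b2 \<ge> 0"
proof -
  define S1 where "S1 = d0*w1 - (u1*v1 + u2*v2)"
  define S2 where "S2 = d0*w2 - (u1*v2 - u2*v1)"
  have id: "(d0*d1 - (u1^2+u2^2))*(d0*d2 - (v1^2+v2^2)) - (S1^2+S2^2) = d0 * DR d0 d1 d2 u1 u2 v1 v2 w1 w2"
    unfolding S1_def S2_def DR_def by algebra
  have "QR2 (d0*d1 - (u1^2+u2^2)) (d0*d2 - (v1^2+v2^2)) S1 S2 a1 b1 a2 b2 \<ge> 0"
  proof (rule QR2_nonneg)
    have "d0 * DR d0 d1 d2 u1 u2 v1 v2 w1 w2 \<ge> 0" using assms by simp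
    then show "S1\<^sup>2 + S2\<^sup>2 \<le> (d0 * d1 - (u1\<^sup>2 + u2\<^sup>2)) * (d0 * d2 - (v1\<^sup>2 + v2\<^sup>2))"
      using id by linarith
  qed (use assms in auto)
  moreover have "d0 * QR d0 d1 d2 u1 u2 v1 v2 w1 w2 a0 b0 a1 b1 a2 b2 =
     (d0*a0 + u1*a1 - u2*b1 + v1*a2 - v2*b2)^2 + (d0*b0 + u1*b1 + u2*a1 + v1*b2 + v2*a2)^2
     + QR2 (d0*d1 - (u1^2+u2^2)) (d0*d2 - (v1^2+v2^2)) S1 S2 a1 b1 a2 b2"
    unfolding QR_def QR2_def S1_def S2_def by algebra
  ultimately have "d0 * QR d0 d1 d2 u1 u2 v1 v2 w1 w2 a0 b0 a1 b1 a2 b2 \<ge> 0" by simp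
  then show ?thesis using assms(1) by (simp add: zero_le_mult_iff)
qed

lemma QR_sym01: "QR d1 d0 d2 u1 (-u2) w1 w2 v1 v2 a1 b1 a0 b0 a2 b2 = QR d0 d1 d2 u1 u2 v1 v2 w1 w2 a0 b0 a1 b1 a2 b2"
  unfolding QR_def by algebra
lemma QR_sym02: "QR d2 d1 d0 w1 (-w2) v1 (-v2) u1 (-u2) a2 b2 a1 b1 a0 b0 = QR d0 d1 d2 u1 u2 v1 v2 w1 w2 a0 b0 a1 b1 a2 b2"
  unfolding QR_def by algebra
lemma E2R_sym01: "E2R d1 d0 d2 u1 (-u2) w1 w2 v1 v2 = E2R d0 d1 d2 u1 u2 v1 v2 w1 w2"
  unfolding E2R_def by algebra
lemma E2R_sym02: "E2R d2 d1 d0 w1 (-w2) v1 (-v2) u1 (-u2) = E2R d0 d1 d2 u1 u2 v1 v2 w1 w2"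
  unfolding E2R_def by algebra
lemma DR_sym01: "DR d1 d0 d2 u1 (-u2) w1 w2 v1 v2 = DR d0 d1 d2 u1 u2 v1 v2 w1 w2"
  unfolding DR_def by algebra
lemma DR_sym02: "DR d2 d1 d0 w1 (-w2) v1 (-v2) u1 (-u2) = DR d0 d1 d2 u1 u2 v1 v2 w1 w2"
  unfolding DR_def by algebra

lemma mp0: "d0 * DR d0 d1 d2 u1 u2 v1 v2 w1 w2 = (d0*d1 - (u1^2+u2^2))*(d0*d2 - (v1^2+v2^2))
   - ((d0*w1 - (u1*v1 + u2*v2))^2 + (d0*w2 - (u1*v2 - u2*v1))^2)"
  unfolding DR_def by algebra

lemma mp0_le: "d0 * DR d0 d1 d2 u1 u2 v1 v2 w1 w2 \<le> (d0*d1 - (u1^2+u2^2))*(d0*d2 - (v1^2+v2^2))"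
  unfolding mp0 by (simp add: add_nonneg_nonneg)

lemma mp1_le: "d1 * DR d0 d1 d2 u1 u2 v1 v2 w1 w2 \<le> (d0*d1 - (u1^2+u2^2))*(d1*d2 - (w1^2+w2^2))"
  using mp0_le[of d1 d0 d2 u1 "-u2" w1 w2 v1 v2] by (simp add: DR_sym01 mult.commute)

lemma mp2_le: "d2 * DR d0 d1 d2 u1 u2 v1 v2 w1 w2 \<le> (d0*d2 - (v1^2+v2^2))*(d1*d2 - (w1^2+w2^2))"
  using mp0_le[of d2 d1 d0 w1 "-w2" v1 "-v2" u1 "-u2"] by (simp add: DR_sym02 mult.commute)

lemma core0:
  assumes "d0 > 0" "d0+d1+d2 \<ge> 0" "E2R d0 d1 d2 u1 u2 v1 v2 w1 w2 \<ge> 0" "DR d0 d1 d2 u1 u2 v1 v2 w1 w2 \<ge> 0"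
  shows "QR d0 d1 d2 u1 u2 v1 v2 w1 w2 a0 b0 a1 b1 a2 b2 \<ge> 0"
proof -
  define M01 where "M01 = d0*d1 - (u1^2+u2^2)"
  define M02 where "M02 = d0*d2 - (v1^2+v2^2)"
  define M12 where "M12 = d1*d2 - (w1^2+w2^2)"
  define D where "D = DR d0 d1 d2 u1 u2 v1 v2 w1 w2"
  have e2: "M01 + M02 + M12 \<ge> 0" using assms(3) unfolding E2R_def M01_def M02_def M12_def .
  have p0: "d0 * D \<le> M01*M02" using mp0_le unfolding M01_def M02_def D_def .
  have p1: "d1 * D \<le> M01*M12" using mp1_le unfolding M01_def M12_def D_def .
  have p2: "d2 * D \<le> M02*M12" using mp2_le unfolding M02_def M12_def D_def .
  have D0: "D \<ge> 0" using assms(4) D_def by simp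
  show ?thesis
  proof (cases "M01 \<ge> 0 \<and> M02 \<ge> 0")
    case True
    then show ?thesis using piv0[OF assms(1)] assms(4) unfolding M01_def M02_def by auto
  next
    case False
    have "M01*M02 \<ge> 0" using p0 D0 assms(1) by (smt (verit) mult_nonneg_nonneg)
    then have neg: "M01 \<le> 0" "M02 \<le> 0" using False by (auto simp: zero_le_mult_iff)
    have "M12 > 0" using neg False e2 by linarith
    then have "d1*d2 > 0" unfolding M12_def by (smt (verit) zero_le_power2)
    show ?thesis
    proof (cases "d1 > 0")
      case True
      then have "d2 > 0" using \<open>d1*d2>0\<close> by (simp add: zero_less_mult_iff)
      have "M01*M12 \<ge> 0" using p1 D0 True by (smt (verit) mult_nonneg_nonneg)
      then have "M01 \<ge> 0" using \<open>M12>0\<close> by (simp add: zero_le_mult_iff)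
      have "M02*M12 \<ge> 0" using p2 D0 \<open>d2>0\<close> by (smt (verit) mult_nonneg_nonneg)
      then have "M02 \<ge> 0" using \<open>M12>0\<close> by (simp add: zero_le_mult_iff)
      then show ?thesis using False \<open>M01 \<ge> 0\<close> by auto
    next
      case False
      then have n1: "d1 < 0" "d2 < 0" using \<open>d1*d2>0\<close> by (auto simp: zero_less_mult_iff)
      have "d0*(d1+d2) \<le> (-(d1+d2))*(d1+d2)"
        using assms(2) n1 by (intro mult_right_mono_neg) auto
      moreover have "d1*d1 + d2*d2 + d1*d2 > 0" using \<open>d1*d2>0\<close> by (smt (verit) zero_le_square)
      moreover have "M01 + M02 + M12 \<le> d0*d1 + d0*d2 + d1*d2"
        unfolding M01_def M02_def M12_def by (smt (verit) zero_le_power2)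
      ultimately have "M01 + M02 + M12 < 0" by (simp add: algebra_simps)
      then show ?thesis using e2 by simp
    qed
  qed
qed

lemma L1:
  assumes "d0+d1+d2 \<ge> 0" "E2R d0 d1 d2 u1 u2 v1 v2 w1 w2 \<ge> 0" "DR d0 d1 d2 u1 u2 v1 v2 w1 w2 \<ge> 0"
  shows "QR d0 d1 d2 u1 u2 v1 v2 w1 w2 a0 b0 a1 b1 a2 b2 \<ge> 0"
proof -
  consider "d0 > 0" | "d1 > 0" | "d2 > 0" | "d0 = 0 \<and> d1 = 0 \<and> d2 = 0" using assms(1) by linarith
  then show ?thesis
  proof cases
    case 1 then show ?thesis using core0 assms by blast
  next
    case 2 then show ?thesis
      using core0[of d1 d0 d2 u1 "-u2" w1 w2 v1 v2 a1 b1 a0 b0 a2 b2] assms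
      by (simp add: QR_sym01 E2R_sym01 DR_sym01 add.commute add.left_commute)
  next
    case 3 then show ?thesis
      using core0[of d2 d1 d0 w1 "-w2" v1 "-v2" u1 "-u2" a2 b2 a1 b1 a0 b0] assms
      by (simp add: QR_sym02 E2R_sym02 DR_sym02 add.commute add.left_commute)
  next
    case 4
    then have "-(u1^2+u2^2) - (v1^2+v2^2) - (w1^2+w2^2) \<ge> 0" using assms(2) unfolding E2R_def by simp
    then have "u1^2 = 0 \<and> u2^2 = 0 \<and> v1^2 = 0 \<and> v2^2=0 \<and> w1^2=0 \<and> w2^2=0"
      by (smt (verit) zero_le_power2)
    then show ?thesis using 4 unfolding QR_def by simp
  qed
qed


definition PSDR where "PSDR d0 d1 d2 u1 u2 v1 v2 w1 w2 \<longleftrightarrow>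
  (\<forall>a0 b0 a1 b1 a2 b2. QR d0 d1 d2 u1 u2 v1 v2 w1 w2 a0 b0 a1 b1 a2 b2 \<ge> 0)"

lemma PSDR_sym01: "PSDR d1 d0 d2 u1 (-u2) w1 w2 v1 v2 = PSDR d0 d1 d2 u1 u2 v1 v2 w1 w2"
  unfolding PSDR_def
proof (intro iffI allI)
  fix a0 b0 a1 b1 a2 b2
  assume H: "\<forall>a0 b0 a1 b1 a2 b2. 0 \<le> QR d1 d0 d2 u1 (- u2) w1 w2 v1 v2 a0 b0 a1 b1 a2 b2"
  show "0 \<le> QR d0 d1 d2 u1 u2 v1 v2 w1 w2 a0 b0 a1 b1 a2 b2"
    using H[rule_format, of a1 b1 a0 b0 a2 b2] by (simp add: QR_sym01)
next
  fix a0 b0 a1 b1 a2 b2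
  assume H: "\<forall>a0 b0 a1 b1 a2 b2. 0 \<le> QR d0 d1 d2 u1 u2 v1 v2 w1 w2 a0 b0 a1 b1 a2 b2"
  show "0 \<le> QR d1 d0 d2 u1 (- u2) w1 w2 v1 v2 a0 b0 a1 b1 a2 b2"
    using H[rule_format, of a1 b1 a0 b0 a2 b2] by (simp add: QR_sym01)
qed
lemma PSDR_sym02: "PSDR d2 d1 d0 w1 (-w2) v1 (-v2) u1 (-u2) = PSDR d0 d1 d2 u1 u2 v1 v2 w1 w2"
  unfolding PSDR_def
proof (intro iffI allI)
  fix a0 b0 a1 b1 a2 b2
  assume H: "\<forall>a0 b0 a1 b1 a2 b2. 0 \<le> QR d2 d1 d0 w1 (-w2) v1 (-v2) u1 (-u2) a0 b0 a1 b1 a2 b2"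
  show "0 \<le> QR d0 d1 d2 u1 u2 v1 v2 w1 w2 a0 b0 a1 b1 a2 b2"
    using H[rule_format, of a2 b2 a1 b1 a0 b0] by (simp add: QR_sym02)
next
  fix a0 b0 a1 b1 a2 b2
  assume H: "\<forall>a0 b0 a1 b1 a2 b2. 0 \<le> QR d0 d1 d2 u1 u2 v1 v2 w1 w2 a0 b0 a1 b1 a2 b2"
  show "0 \<le> QR d2 d1 d0 w1 (-w2) v1 (-v2) u1 (-u2) a0 b0 a1 b1 a2 b2"
    using H[rule_format, of a2 b2 a1 b1 a0 b0] by (simp add: QR_sym02)
qed

lemma L2_01:
  assumes "PSDR d0 d1 d2 u1 u2 v1 v2 w1 w2"
  shows "d0*d1 - (u1^2+u2^2) \<ge> 0"
proof -
  have P: "\<And>a0 b0 a1 b1 a2 b2. QR d0 d1 d2 u1 u2 v1 v2 w1 w2 a0 b0 a1 b1 a2 b2 \<ge> 0"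
    using assms unfolding PSDR_def by blast
  have e0: "QR d0 d1 d2 u1 u2 v1 v2 w1 w2 1 0 0 0 0 0 = d0" unfolding QR_def by simp
  have e1: "QR d0 d1 d2 u1 u2 v1 v2 w1 w2 0 0 1 0 0 0 = d1" unfolding QR_def by simp
  have d0: "d0 \<ge> 0" using P[of 1 0 0 0 0 0] unfolding e0 .
  have d1: "d1 \<ge> 0" using P[of 0 0 1 0 0 0] unfolding e1 .
  have t1: "QR d0 d1 d2 u1 u2 v1 v2 w1 w2 (-u1) (-u2) d0 0 0 0 = d0*(d0*d1 - (u1^2+u2^2))"
    unfolding QR_def by (simp add: power2_eq_square algebra_simps)
  have t2: "QR d0 d1 d2 u1 u2 v1 v2 w1 w2 d1 0 (-u1) u2 0 0 = d1*(d0*d1 - (u1^2+u2^2))"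
    unfolding QR_def by (simp add: power2_eq_square algebra_simps)
  have t3: "QR d0 d1 d2 u1 u2 v1 v2 w1 w2 (-u1) (-u2) 1 0 0 0 = d0*(u1^2+u2^2) - 2*(u1^2+u2^2) + d1"
    unfolding QR_def by (simp add: power2_eq_square algebra_simps)
  have h1: "0 \<le> d0*(d0*d1 - (u1^2+u2^2))" using P[of "-u1" "-u2" d0 0 0 0] unfolding t1 .
  have h2: "0 \<le> d1*(d0*d1 - (u1^2+u2^2))" using P[of d1 0 "-u1" u2 0 0] unfolding t2 .
  have h3: "0 \<le> d0*(u1^2+u2^2) - 2*(u1^2+u2^2) + d1" using P[of "-u1" "-u2" 1 0 0 0] unfolding t3 .
  consider "d0 > 0" | "d1 > 0" | "d0 = 0 \<and> d1 = 0" using d0 d1 by linarith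
  then show ?thesis
  proof cases
    case 1 then show ?thesis using h1 by (simp add: zero_le_mult_iff)
  next
    case 2 then show ?thesis using h2 by (simp add: zero_le_mult_iff)
  next
    case 3 then have "u1^2+u2^2 \<le> 0" using h3 by simp
    then show ?thesis using 3 by simp
  qed
qed

lemma L2_12: "PSDR d0 d1 d2 u1 u2 v1 v2 w1 w2 \<Longrightarrow> d1*d2 - (w1^2+w2^2) \<ge> 0"
  using L2_01[of d2 d1 d0 w1 "-w2" v1 "-v2" u1 "-u2"] by (simp add: PSDR_sym02 mult.commute)
lemma L2_02: "PSDR d0 d1 d2 u1 u2 v1 v2 w1 w2 \<Longrightarrow> d0*d2 - (v1^2+v2^2) \<ge> 0"
  using L2_12[of d1 d0 d2 u1 "-u2" w1 w2 v1 v2] by (simp add: PSDR_sym01 mult.commute)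

lemma L2: "PSDR d0 d1 d2 u1 u2 v1 v2 w1 w2 \<Longrightarrow> E2R d0 d1 d2 u1 u2 v1 v2 w1 w2 \<ge> 0"
  using L2_01 L2_02 L2_12 unfolding E2R_def by (smt (verit))

lemma adj0: "QR d0 d1 d2 u1 u2 v1 v2 w1 w2 (d1*d2 - (w1^2+w2^2)) 0 (w1*v1 + w2*v2 - d2*u1) (w2*v1 - w1*v2 + d2*u2)
   (u1*w1 - u2*w2 - d1*v1) (-(u1*w2+u2*w1) + d1*v2) = DR d0 d1 d2 u1 u2 v1 v2 w1 w2 * (d1*d2 - (w1^2+w2^2))"
  unfolding QR_def DR_def by (simp add: power2_eq_square) algebra

lemma L3a: "PSDR d0 d1 d2 u1 u2 v1 v2 w1 w2 \<Longrightarrow> DR d0 d1 d2 u1 u2 v1 v2 w1 w2 * (d1*d2 - (w1^2+w2^2)) \<ge> 0"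
  unfolding PSDR_def adj0[symmetric] by blast
lemma L3b: "PSDR d0 d1 d2 u1 u2 v1 v2 w1 w2 \<Longrightarrow> DR d0 d1 d2 u1 u2 v1 v2 w1 w2 * (d0*d2 - (v1^2+v2^2)) \<ge> 0"
  using L3a[of d1 d0 d2 u1 "-u2" w1 w2 v1 v2] by (simp add: PSDR_sym01 DR_sym01 mult.commute)
lemma L3c: "PSDR d0 d1 d2 u1 u2 v1 v2 w1 w2 \<Longrightarrow> DR d0 d1 d2 u1 u2 v1 v2 w1 w2 * (d0*d1 - (u1^2+u2^2)) \<ge> 0"
  using L3a[of d2 d1 d0 w1 "-w2" v1 "-v2" u1 "-u2"] by (simp add: PSDR_sym02 DR_sym02 mult.commute)

lemma L3: assumes "PSDR d0 d1 d2 u1 u2 v1 v2 w1 w2" "E2R d0 d1 d2 u1 u2 v1 v2 w1 w2 > 0"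
  shows "DR d0 d1 d2 u1 u2 v1 v2 w1 w2 \<ge> 0"
proof -
  have "DR d0 d1 d2 u1 u2 v1 v2 w1 w2 * E2R d0 d1 d2 u1 u2 v1 v2 w1 w2 \<ge> 0"
  proof -
    have "DR d0 d1 d2 u1 u2 v1 v2 w1 w2 * E2R d0 d1 d2 u1 u2 v1 v2 w1 w2 =
      DR d0 d1 d2 u1 u2 v1 v2 w1 w2 * (d0*d1 - (u1^2+u2^2)) + DR d0 d1 d2 u1 u2 v1 v2 w1 w2 * (d0*d2 - (v1^2+v2^2))
      + DR d0 d1 d2 u1 u2 v1 v2 w1 w2 * (d1*d2 - (w1^2+w2^2))"
      unfolding E2R_def by (simp add: distrib_left)
    then show ?thesis using L3a[OF assms(1)] L3b[OF assms(1)] L3c[OF assms(1)] by linarith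
  qed
  then show ?thesis using assms(2) by (simp add: zero_le_mult_iff)
qed

lemma L4: assumes "d0+d1+d2 > 0" "E2R d0 d1 d2 u1 u2 v1 v2 w1 w2 = 0"
  shows "DR d0 d1 d2 u1 u2 v1 v2 w1 w2 \<le> 0"
proof (rule ccontr)
  assume "\<not> ?thesis"
  then have D: "DR d0 d1 d2 u1 u2 v1 v2 w1 w2 > 0" by simp
  have P: "PSDR d0 d1 d2 u1 u2 v1 v2 w1 w2" unfolding PSDR_def by (intro allI L1) (use assms D in auto)
  have m: "d0*d1 - (u1^2+u2^2) = 0" "d0*d2 - (v1^2+v2^2) = 0" "d1*d2 - (w1^2+w2^2) = 0"
    using L2_01[OF P] L2_02[OF P] L2_12[OF P] assms(2) unfolding E2R_def by linarith+
  have q0: "d0 * DR d0 d1 d2 u1 u2 v1 v2 w1 w2 \<le> (d0*d1 - (u1^2+u2^2))*(d0*d2 - (v1^2+v2^2))" by (rule mp0_le)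
  have q1: "d1 * DR d0 d1 d2 u1 u2 v1 v2 w1 w2 \<le> (d0*d1 - (u1^2+u2^2))*(d1*d2 - (w1^2+w2^2))" by (rule mp1_le)
  have q2: "d2 * DR d0 d1 d2 u1 u2 v1 v2 w1 w2 \<le> (d0*d2 - (v1^2+v2^2))*(d1*d2 - (w1^2+w2^2))" by (rule mp2_le)
  have "d0 * DR d0 d1 d2 u1 u2 v1 v2 w1 w2 \<le> 0" "d1 * DR d0 d1 d2 u1 u2 v1 v2 w1 w2 \<le> 0"
       "d2 * DR d0 d1 d2 u1 u2 v1 v2 w1 w2 \<le> 0"
    using q0 q1 q2 unfolding m by simp_all
  then have "(d0+d1+d2) * DR d0 d1 d2 u1 u2 v1 v2 w1 w2 \<le> 0" by (simp add: distrib_right)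
  then show False using assms(1) D by (simp add: mult_le_0_iff)
qed



lemma omega_eq: "omega = Complex (-1/2) (sqrt 3 / 2)"
proof -
  have e: "2*pi/3 = pi - pi/3" by simp
  have c0: "cos (pi - pi/3) = -1/2" by (simp only: cos_pi_minus cos_60)
  have s0: "sin (pi - pi/3) = sqrt 3/2" by (simp only: sin_pi_minus sin_60)
  have c: "cos (2*pi/3) = -1/2" using c0 e by metis
  have s: "sin (2*pi/3) = sqrt 3/2" using s0 e by metis
  show ?thesis unfolding omega_def complex_eq_iff using c s by simp
qed

lemma s3: "sqrt 3 * sqrt 3 = (3::real)" by simp

lemma omega2: "omega^2 = Complex (-1/2) (- sqrt 3 / 2)"
  unfolding omega_eq by (simp add: complex_eq_iff power2_eq_square)
lemma omega3: "omega^3 = 1"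
proof -
  have "omega^3 = omega^2 * omega" by (simp add: power3_eq_cube power2_eq_square)
  then show ?thesis unfolding omega2 by (simp add: omega_eq complex_eq_iff algebra_simps)
qed
lemma omega4: "omega^4 = omega"
proof -
  have "omega^4 = omega^3 * omega" by (simp add: power_Suc2[symmetric] del: power_Suc)
  then show ?thesis using omega3 by simp
qed

lemma Zpow: "(Zop ^^ n) v j = omega^(n*j) * v j"
  by (induction n) (auto simp: Zop_def power_add mult.commute)

lemma Xpow: "j < 3 \<Longrightarrow> (Xop ^^ m) v j = v ((j + 2*m) mod 3)"
proof (induction m arbitrary: j)
  case 0 then show ?case by simp
next
  case (Suc m)
  have "(Xop ^^ Suc m) v j = Xop ((Xop ^^ m) v) j" by simp
  also have "\<dots> = (Xop ^^ m) v ((j+2) mod 3)" by (simp add: Xop_def)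
  also have "\<dots> = v (((j+2) mod 3 + 2*m) mod 3)" by (rule Suc.IH) simp
  also have "((j+2) mod 3 + 2*m) mod 3 = (j+2+2*m) mod 3" by (rule mod_add_left_eq)
  then have "v (((j+2) mod 3 + 2*m) mod 3) = v ((j + 2 * Suc m) mod 3)" by (simp add: algebra_simps)
  finally show ?case .
qed

lemma sic: "j < 3 \<Longrightarrow> sic_vec m n j = omega^(n * ((j + 2*m) mod 3)) * psi0 ((j + 2*m) mod 3)"
  unfolding sic_vec_def by (simp add: Xpow Zpow)


lemma set19: "{1..9::nat} = {1,2,3,4,5,6,7,8,9}" by auto
lemma sum19: "(\<Sum>i\<in>{1..9::nat}. f i) = f 1 + f 2 + f 3 + f 4 + f 5 + f 6 + f 7 + f 8 + f 9"
  unfolding set19 by (simp add: add.assoc)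

definition Fpoly :: "(nat \<Rightarrow> real) \<Rightarrow> real" where
 "Fpoly n = (n 1^3 + n 2^3 + n 3^3 + n 4^3 + n 5^3 + n 6^3 + n 7^3 + n 8^3 + n 9^3)
   - 3*(n 1*n 2*n 3 + n 4*n 5*n 6 + n 7*n 8*n 9 + n 1*n 4*n 7 + n 2*n 5*n 8 + n 3*n 6*n 9
        + n 1*n 5*n 9 + n 2*n 6*n 7 + n 3*n 4*n 8 + n 1*n 6*n 8 + n 2*n 4*n 9 + n 3*n 5*n 7)"

lemma perm3:
  assumes "a \<noteq> b" "b \<noteq> c" "a \<noteq> c"
  shows "{(i,j,k). i \<noteq> j \<and> j \<noteq> k \<and> i \<noteq> k \<and> {i,j,k} = {a,b,c}} =
     {(a,b,c),(a,c,b),(b,a,c),(b,c,a),(c,a,b),(c,b,a)}"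
proof (intro equalityI subsetI)
  fix t assume "t \<in> {(i,j,k). i \<noteq> j \<and> j \<noteq> k \<and> i \<noteq> k \<and> {i,j,k} = {a,b,c}}"
  then obtain i j k where t: "t = (i,j,k)" "i \<noteq> j" "j \<noteq> k" "i \<noteq> k" and s: "{i,j,k} = {a,b,c}" by auto
  have "i \<in> {a,b,c}" "j \<in> {a,b,c}" "k \<in> {a,b,c}" using s by blast+
  then show "t \<in> {(a,b,c),(a,c,b),(b,a,c),(b,c,a),(c,a,b),(c,b,a)}" using t by auto
next
  fix t assume "t \<in> {(a,b,c),(a,c,b),(b,a,c),(b,c,a),(c,a,b),(c,b,a)}"
  then show "t \<in> {(i,j,k). i \<noteq> j \<and> j \<noteq> k \<and> i \<noteq> k \<and> {i,j,k} = {a,b,c}}"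
    using assms by (auto simp: insert_commute)
qed

lemma Qtrip_UN: "Qtrip = (\<Union>L\<in>lines. {(i,j,k). i \<noteq> j \<and> j \<noteq> k \<and> i \<noteq> k \<and> {i,j,k} = L})"
  unfolding Qtrip_def by auto

lemma Qtrip_eq: "Qtrip = {(1,2,3),(1,3,2),(2,1,3),(2,3,1),(3,1,2),(3,2,1),
 (4,5,6),(4,6,5),(5,4,6),(5,6,4),(6,4,5),(6,5,4),
 (7,8,9),(7,9,8),(8,7,9),(8,9,7),(9,7,8),(9,8,7),
 (1,4,7),(1,7,4),(4,1,7),(4,7,1),(7,1,4),(7,4,1),
 (2,5,8),(2,8,5),(5,2,8),(5,8,2),(8,2,5),(8,5,2),
 (3,6,9),(3,9,6),(6,3,9),(6,9,3),(9,3,6),(9,6,3),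
 (1,5,9),(1,9,5),(5,1,9),(5,9,1),(9,1,5),(9,5,1),
 (2,6,7),(2,7,6),(6,2,7),(6,7,2),(7,2,6),(7,6,2),
 (3,4,8),(3,8,4),(4,3,8),(4,8,3),(8,3,4),(8,4,3),
 (1,6,8),(1,8,6),(6,1,8),(6,8,1),(8,1,6),(8,6,1),
 (2,4,9),(2,9,4),(4,2,9),(4,9,2),(9,2,4),(9,4,2),
 (3,5,7),(3,7,5),(5,3,7),(5,7,3),(7,3,5),(7,5,3)}"
  unfolding Qtrip_UN lines_def by (simp add: perm3 insert_commute)


lemma Ffun_eq: "Ffun n = Fpoly n"
  unfolding Ffun_def Qtrip_eq Fpoly_def sum19
  by (simp add: algebra_simps)



definition herm :: "real\<Rightarrow>real\<Rightarrow>real\<Rightarrow>complex\<Rightarrow>complex\<Rightarrow>complex\<Rightarrow>nat\<Rightarrow>nat\<Rightarrow>complex" where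
 "herm d0 d1 d2 u v w a b =
   (if a = 0 then (if b = 0 then of_real d0 else if b = 1 then u else v)
    else if a = 1 then (if b = 0 then cnj u else if b = 1 then of_real d1 else w)
    else (if b = 0 then cnj v else if b = 1 then cnj w else of_real d2))"

lemma all3: "(\<forall>a::nat<3. P a) \<longleftrightarrow> P 0 \<and> P 1 \<and> P 2"
proof
  assume "P 0 \<and> P 1 \<and> P 2"
  then show "\<forall>a<3. P a"
  proof (intro allI impI)
    fix a :: nat assume "a < 3"
    then have "a = 0 \<or> a = 1 \<or> a = 2" by auto
    then show "P a" using \<open>P 0 \<and> P 1 \<and> P 2\<close> by auto
  qed
qed auto

lemma sum3: "(\<Sum>a<3::nat. f a) = f 0 + f 1 + f 2"
  by (simp add: numeral_3_eq_3 numeral_2_eq_2)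

lemma density_iff:
  assumes A: "\<And>a b. a < 3 \<Longrightarrow> b < 3 \<Longrightarrow> A a b = herm d0 d1 d2 u v w a b"
  shows "density_op A \<longleftrightarrow> d0+d1+d2 = 1 \<and> PSDR d0 d1 d2 (Re u) (Im u) (Re v) (Im v) (Re w) (Im w)"
proof -
  have e: "A 0 0 = of_real d0" "A 0 1 = u" "A 0 2 = v" "A 1 0 = cnj u" "A 1 1 = of_real d1" "A 1 2 = w"
    "A 2 0 = cnj v" "A 2 1 = cnj w" "A 2 2 = of_real d2" by (simp_all add: A herm_def)
  have H: "\<forall>a<3. \<forall>b<3. A a b = cnj (A b a)" unfolding all3 e by simp
  have T: "(\<Sum>a<3. A a a) = 1 \<longleftrightarrow> d0+d1+d2 = 1"
    unfolding sum3 e by (metis of_real_add of_real_eq_1_iff)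
  have Q: "Re (\<Sum>a<3. \<Sum>b<3. cnj (x a) * A a b * x b) =
     QR d0 d1 d2 (Re u) (Im u) (Re v) (Im v) (Re w) (Im w) (Re (x 0)) (Im (x 0)) (Re (x 1)) (Im (x 1)) (Re (x 2)) (Im (x 2))"
    for x :: "nat \<Rightarrow> complex"
    unfolding sum3 e QR_def by (simp add: power2_eq_square algebra_simps)
  have P: "(\<forall>x :: nat \<Rightarrow> complex. 0 \<le> Re (\<Sum>a<3. \<Sum>b<3. cnj (x a) * A a b * x b)) \<longleftrightarrow>
       PSDR d0 d1 d2 (Re u) (Im u) (Re v) (Im v) (Re w) (Im w)"
  proof
    assume H0: "\<forall>x :: nat \<Rightarrow> complex. 0 \<le> Re (\<Sum>a<3. \<Sum>b<3. cnj (x a) * A a b * x b)"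
    have h: "0 \<le> QR d0 d1 d2 (Re u) (Im u) (Re v) (Im v) (Re w) (Im w) (Re (x 0)) (Im (x 0)) (Re (x 1)) (Im (x 1)) (Re (x 2)) (Im (x 2))" for x :: "nat \<Rightarrow> complex"
      using H0[rule_format, of x] unfolding Q .
    show "PSDR d0 d1 d2 (Re u) (Im u) (Re v) (Im v) (Re w) (Im w)" unfolding PSDR_def
    proof (intro allI)
      fix a0 b0 a1 b1 a2 b2
      show "0 \<le> QR d0 d1 d2 (Re u) (Im u) (Re v) (Im v) (Re w) (Im w) a0 b0 a1 b1 a2 b2"
        using h[of "\<lambda>j. if j = 0 then Complex a0 b0 else if j = 1 then Complex a1 b1 else Complex a2 b2"] by simp
    qed
  next
    assume "PSDR d0 d1 d2 (Re u) (Im u) (Re v) (Im v) (Re w) (Im w)"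
    then show "\<forall>x :: nat \<Rightarrow> complex. 0 \<le> Re (\<Sum>a<3. \<Sum>b<3. cnj (x a) * A a b * x b)"
      unfolding PSDR_def Q by simp
  qed
  show ?thesis unfolding density_op_def using H T P by blast
qed



definition "pd0 nv r = 1/3 + 2*r*(nv 4 + nv 5 + nv 6 + nv 7 + nv 8 + nv 9)"
definition "pd1 nv r = 1/3 + 2*r*(nv 1 + nv 2 + nv 3 + nv 7 + nv 8 + nv 9)"
definition "pd2 nv r = 1/3 + 2*r*(nv 1 + nv 2 + nv 3 + nv 4 + nv 5 + nv 6)"
definition "pu1 nv r = -2*r*(nv 7 - (nv 8 + nv 9)/2)"
definition "pu2 nv r = - sqrt 3 * r * (nv 9 - nv 8)"
definition "pv1 nv r = -2*r*(nv 4 - (nv 5 + nv 6)/2)"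
definition "pv2 nv r = - sqrt 3 * r * (nv 5 - nv 6)"
definition "pw1 nv r = -2*r*(nv 1 - (nv 2 + nv 3)/2)"
definition "pw2 nv r = - sqrt 3 * r * (nv 3 - nv 2)"

lemmas pdefs = pd0_def pd1_def pd2_def pu1_def pu2_def pv1_def pv2_def pw1_def pw2_def

lemma rho_00: "rho nv r 0 0 = herm (pd0 nv r) (pd1 nv r) (pd2 nv r) (Complex (pu1 nv r) (pu2 nv r))
     (Complex (pv1 nv r) (pv2 nv r)) (Complex (pw1 nv r) (pw2 nv r)) 0 0"
  unfolding rho_def sum19 Proj_def Let_def herm_def pdefs
  apply (simp add: sic psi0_def)
  apply (simp add: complex_eq_iff omega_eq prob_def power2_eq_square eval_nat_numeral)
  by (simp_all add: field_simps)

lemma rho_01: "rho nv r 0 1 = herm (pd0 nv r) (pd1 nv r) (pd2 nv r) (Complex (pu1 nv r) (pu2 nv r))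
     (Complex (pv1 nv r) (pv2 nv r)) (Complex (pw1 nv r) (pw2 nv r)) 0 1"
  unfolding rho_def sum19 Proj_def Let_def herm_def pdefs
  apply (simp add: sic psi0_def)
  apply (simp add: complex_eq_iff omega_eq prob_def power2_eq_square eval_nat_numeral)
  by (simp_all add: field_simps)

lemma rho_02: "rho nv r 0 2 = herm (pd0 nv r) (pd1 nv r) (pd2 nv r) (Complex (pu1 nv r) (pu2 nv r))
     (Complex (pv1 nv r) (pv2 nv r)) (Complex (pw1 nv r) (pw2 nv r)) 0 2"
  unfolding rho_def sum19 Proj_def Let_def herm_def pdefs
  apply (simp add: sic psi0_def)
  apply (simp add: complex_eq_iff omega_eq prob_def power2_eq_square eval_nat_numeral)
  by (simp_all add: field_simps)

lemma rho_10: "rho nv r 1 0 = herm (pd0 nv r) (pd1 nv r) (pd2 nv r) (Complex (pu1 nv r) (pu2 nv r))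
     (Complex (pv1 nv r) (pv2 nv r)) (Complex (pw1 nv r) (pw2 nv r)) 1 0"
  unfolding rho_def sum19 Proj_def Let_def herm_def pdefs
  apply (simp add: sic psi0_def)
  apply (simp add: complex_eq_iff omega_eq prob_def power2_eq_square eval_nat_numeral)
  by (simp_all add: field_simps)

lemma rho_11: "rho nv r 1 1 = herm (pd0 nv r) (pd1 nv r) (pd2 nv r) (Complex (pu1 nv r) (pu2 nv r))
     (Complex (pv1 nv r) (pv2 nv r)) (Complex (pw1 nv r) (pw2 nv r)) 1 1"
  unfolding rho_def sum19 Proj_def Let_def herm_def pdefs
  apply (simp add: sic psi0_def)
  apply (simp add: complex_eq_iff omega_eq prob_def power2_eq_square eval_nat_numeral)
  by (simp_all add: field_simps)

lemma rho_12: "rho nv r 1 2 = herm (pd0 nv r) (pd1 nv r) (pd2 nv r) (Complex (pu1 nv r) (pu2 nv r))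
     (Complex (pv1 nv r) (pv2 nv r)) (Complex (pw1 nv r) (pw2 nv r)) 1 2"
  unfolding rho_def sum19 Proj_def Let_def herm_def pdefs
  apply (simp add: sic psi0_def)
  apply (simp add: complex_eq_iff omega_eq prob_def power2_eq_square eval_nat_numeral)
  by (simp_all add: field_simps)

lemma rho_20: "rho nv r 2 0 = herm (pd0 nv r) (pd1 nv r) (pd2 nv r) (Complex (pu1 nv r) (pu2 nv r))
     (Complex (pv1 nv r) (pv2 nv r)) (Complex (pw1 nv r) (pw2 nv r)) 2 0"
  unfolding rho_def sum19 Proj_def Let_def herm_def pdefs
  apply (simp add: sic psi0_def)
  apply (simp add: complex_eq_iff omega_eq prob_def power2_eq_square eval_nat_numeral)
  by (simp_all add: field_simps)

lemma rho_21: "rho nv r 2 1 = herm (pd0 nv r) (pd1 nv r) (pd2 nv r) (Complex (pu1 nv r) (pu2 nv r))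
     (Complex (pv1 nv r) (pv2 nv r)) (Complex (pw1 nv r) (pw2 nv r)) 2 1"
  unfolding rho_def sum19 Proj_def Let_def herm_def pdefs
  apply (simp add: sic psi0_def)
  apply (simp add: complex_eq_iff omega_eq prob_def power2_eq_square eval_nat_numeral)
  by (simp_all add: field_simps)

lemma rho_22: "rho nv r 2 2 = herm (pd0 nv r) (pd1 nv r) (pd2 nv r) (Complex (pu1 nv r) (pu2 nv r))
     (Complex (pv1 nv r) (pv2 nv r)) (Complex (pw1 nv r) (pw2 nv r)) 2 2"
  unfolding rho_def sum19 Proj_def Let_def herm_def pdefs
  apply (simp add: sic psi0_def)
  apply (simp add: complex_eq_iff omega_eq prob_def power2_eq_square eval_nat_numeral)
  by (simp_all add: field_simps)

lemma rho_herm: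
  assumes "a < 3" "b < 3"
  shows "rho nv r a b = herm (pd0 nv r) (pd1 nv r) (pd2 nv r) (Complex (pu1 nv r) (pu2 nv r))
     (Complex (pv1 nv r) (pv2 nv r)) (Complex (pw1 nv r) (pw2 nv r)) a b"
proof -
  have "a = 0 \<or> a = 1 \<or> a = 2" "b = 0 \<or> b = 1 \<or> b = 2" using assms by auto
  then show ?thesis using rho_00 rho_01 rho_02 rho_10 rho_11 rho_12 rho_20 rho_21 rho_22 by auto
qed



lemma E2id:
  fixes r u2 v2 w2 n1 n2 n3 n4 n5 n6 n7 n8 n9 :: real
  assumes "u2^2 = 3*r^2*(n9-n8)^2" "v2^2 = 3*r^2*(n5-n6)^2" "w2^2 = 3*r^2*(n3-n2)^2"
    and n9: "n9 = -(n1+n2+n3+n4+n5+n6+n7+n8)"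
  shows "E2R (1/3 + 2*r*(n4 + n5 + n6 + n7 + n8 + n9)) (1/3 + 2*r*(n1 + n2 + n3 + n7 + n8 + n9))
    (1/3 + 2*r*(n1 + n2 + n3 + n4 + n5 + n6)) (-2*r*(n7 - (n8 + n9)/2)) u2
    (-2*r*(n4 - (n5 + n6)/2)) v2 (-2*r*(n1 - (n2 + n3)/2)) w2
    = 1/3 - 6*r^2*(n1^2+n2^2+n3^2+n4^2+n5^2+n6^2+n7^2+n8^2+n9^2)"
  unfolding E2R_def assms(1,2,3) unfolding n9 by (simp add: power2_eq_square) algebra

lemma DR_alt: "DR d0 d1 d2 u1 u2 v1 v2 w1 w2 = d0*d1*d2 + 2*((u1*w1 - u2*w2)*v1 + u1*(w2*v2) + w1*(u2*v2))
    - d0*(w1^2+w2^2) - d1*(v1^2+v2^2) - d2*(u1^2+u2^2)"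
  unfolding DR_def by (simp add: power2_eq_square) algebra

lemma Did:
  fixes r u2 v2 w2 n1 n2 n3 n4 n5 n6 n7 n8 n9 :: real
  assumes "u2^2 = 3*r^2*(n9-n8)^2" "v2^2 = 3*r^2*(n5-n6)^2" "w2^2 = 3*r^2*(n3-n2)^2"
    "u2*w2 = 3*r^2*(n9-n8)*(n3-n2)" "w2*v2 = 3*r^2*(n3-n2)*(n5-n6)" "u2*v2 = 3*r^2*(n9-n8)*(n5-n6)"
    and n9: "n9 = -(n1+n2+n3+n4+n5+n6+n7+n8)"
  shows "DR (1/3 + 2*r*(n4 + n5 + n6 + n7 + n8 + n9)) (1/3 + 2*r*(n1 + n2 + n3 + n7 + n8 + n9))
    (1/3 + 2*r*(n1 + n2 + n3 + n4 + n5 + n6)) (-2*r*(n7 - (n8 + n9)/2)) u2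
    (-2*r*(n4 - (n5 + n6)/2)) v2 (-2*r*(n1 - (n2 + n3)/2)) w2
    = 1/27 - 2*r^2*(n1^2+n2^2+n3^2+n4^2+n5^2+n6^2+n7^2+n8^2+n9^2)
      + 8*r^3*((n1^3 + n2^3 + n3^3 + n4^3 + n5^3 + n6^3 + n7^3 + n8^3 + n9^3)
   - 3*(n1*n2*n3 + n4*n5*n6 + n7*n8*n9 + n1*n4*n7 + n2*n5*n8 + n3*n6*n9
        + n1*n5*n9 + n2*n6*n7 + n3*n4*n8 + n1*n6*n8 + n2*n4*n9 + n3*n5*n7))"
  unfolding DR_alt assms(1-6) unfolding n9 by (simp add: power2_eq_square power3_eq_cube) algebra



lemma gmono:
  fixes F c s a b :: real
  assumes cs: "c*s = 1/6" and s: "0<s" and c: "0<c" and Fc: "F \<le> c" and a: "0 \<le> a" and ab: "a<b" and bs: "b\<le>s"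
  shows "4*b^3*F - b^2 + 1/54 < 4*a^3*F - a^2 + 1/54"
proof -
  have b: "b > 0" using a ab by linarith
  have as: "a < s" using ab bs by linarith
  have k1: "a*a \<le> a*s" using a as by (intro mult_left_mono) auto
  have k2: "b*b \<le> b*s" using b bs by (intro mult_left_mono) auto
  have k3: "a*b \<le> a*s" using a bs by (intro mult_left_mono) auto
  have k4: "a*b < b*s" using b as by (simp add: mult.commute)
  have k: "a*a + a*b + b*b < 3/2*(a+b)*s" using k1 k2 k3 k4 by (simp add: algebra_simps)
  have q: "a*a + a*b + b*b \<ge> 0" using a b by simp
  have main: "4*F*(a*a+a*b+b*b) < a+b"
  proof (cases "F \<le> 0")
    case True
    then have "4*F*(a*a+a*b+b*b) \<le> 0" using q by (simp add: mult_nonpos_nonneg)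
    then show ?thesis using a b by linarith
  next
    case False
    have "4*F*(a*a+a*b+b*b) \<le> 4*c*(a*a+a*b+b*b)" using Fc q by (intro mult_right_mono) auto
    also have "\<dots> < 4*c*(3/2*(a+b)*s)" using k c by (intro mult_strict_left_mono) auto
    also have "\<dots> = 6*(c*s)*(a+b)" by (simp add: algebra_simps)
    also have "\<dots> = a+b" using cs by simp
    finally show ?thesis .
  qed
  have "(4*b^3*F - b^2 + 1/54) - (4*a^3*F - a^2 + 1/54) = (b-a)*(4*F*(a*a+a*b+b*b) - (a+b))"
    by (simp add: algebra_simps power2_eq_square power3_eq_cube)
  also have "\<dots> < 0" using ab main by (intro mult_pos_neg) auto
  finally show ?thesis by simp
qed

definition "PS nv r = PSDR (pd0 nv r) (pd1 nv r) (pd2 nv r) (pu1 nv r) (pu2 nv r) (pv1 nv r) (pv2 nv r) (pw1 nv r) (pw2 nv r)"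
definition "EE nv r = E2R (pd0 nv r) (pd1 nv r) (pd2 nv r) (pu1 nv r) (pu2 nv r) (pv1 nv r) (pv2 nv r) (pw1 nv r) (pw2 nv r)"
definition "DD nv r = DR (pd0 nv r) (pd1 nv r) (pd2 nv r) (pu1 nv r) (pu2 nv r) (pv1 nv r) (pv2 nv r) (pw1 nv r) (pw2 nv r)"

lemma trace_p: fixes nv :: "nat \<Rightarrow> real" shows "(\<Sum>i\<in>{1..9}. nv i) = 0 \<Longrightarrow> pd0 nv r + pd1 nv r + pd2 nv r = 1"
  unfolding sum19 pd0_def pd1_def pd2_def
proof -
  assume h: "nv 1 + nv 2 + nv 3 + nv 4 + nv 5 + nv 6 + nv 7 + nv 8 + nv 9 = 0"
  have "1 / 3 + 2 * r * (nv 4 + nv 5 + nv 6 + nv 7 + nv 8 + nv 9) +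
    (1 / 3 + 2 * r * (nv 1 + nv 2 + nv 3 + nv 7 + nv 8 + nv 9)) +
    (1 / 3 + 2 * r * (nv 1 + nv 2 + nv 3 + nv 4 + nv 5 + nv 6)) = 1 + 4*r*(nv 1 + nv 2 + nv 3 + nv 4 + nv 5 + nv 6 + nv 7 + nv 8 + nv 9)"
    by (simp add: algebra_simps)
  then show "1 / 3 + 2 * r * (nv 4 + nv 5 + nv 6 + nv 7 + nv 8 + nv 9) +
    (1 / 3 + 2 * r * (nv 1 + nv 2 + nv 3 + nv 7 + nv 8 + nv 9)) +
    (1 / 3 + 2 * r * (nv 1 + nv 2 + nv 3 + nv 4 + nv 5 + nv 6)) = 1" using h by simp
qed

lemma density_rho: fixes nv :: "nat \<Rightarrow> real" shows "(\<Sum>i\<in>{1..9}. nv i) = 0 \<Longrightarrow> density_op (rho nv r) \<longleftrightarrow> PS nv r"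
  using density_iff[of "rho nv r", OF rho_herm] trace_p unfolding PS_def by simp

lemma s3prod: fixes r a b :: real shows "(-sqrt 3 * r * a) * (-sqrt 3 * r * b) = 3*r^2*a*b"
proof -
  have "(-sqrt 3 * r * a) * (-sqrt 3 * r * b) = (sqrt 3 * sqrt 3)*(r^2*a*b)"
    by (simp add: power2_eq_square mult_ac)
  then show ?thesis by simp
qed

lemma sq_facts: fixes nv :: "nat \<Rightarrow> real" shows
  "pu2 nv r ^2 = 3*r^2*(nv 9 - nv 8)^2" "pv2 nv r^2 = 3*r^2*(nv 5 - nv 6)^2" "pw2 nv r^2 = 3*r^2*(nv 3 - nv 2)^2"
  "pu2 nv r * pw2 nv r = 3*r^2*(nv 9 - nv 8)*(nv 3 - nv 2)" "pw2 nv r * pv2 nv r = 3*r^2*(nv 3 - nv 2)*(nv 5 - nv 6)"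
  "pu2 nv r * pv2 nv r = 3*r^2*(nv 9 - nv 8)*(nv 5 - nv 6)"
proof -
  have s: "sqrt 3 * sqrt 3 = (3::real)" by simp
  show "pu2 nv r ^2 = 3*r^2*(nv 9 - nv 8)^2" "pv2 nv r^2 = 3*r^2*(nv 5 - nv 6)^2" "pw2 nv r^2 = 3*r^2*(nv 3 - nv 2)^2"
    unfolding pu2_def pv2_def pw2_def by (simp_all add: power_mult_distrib)
  show "pu2 nv r * pw2 nv r = 3*r^2*(nv 9 - nv 8)*(nv 3 - nv 2)" "pw2 nv r * pv2 nv r = 3*r^2*(nv 3 - nv 2)*(nv 5 - nv 6)"
    "pu2 nv r * pv2 nv r = 3*r^2*(nv 9 - nv 8)*(nv 5 - nv 6)"
    unfolding pu2_def pv2_def pw2_def by (rule s3prod)+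
qed

lemma EE_eq: fixes nv :: "nat \<Rightarrow> real"
  assumes "(\<Sum>i\<in>{1..9}. nv i) = 0" "(\<Sum>i\<in>{1..9}. (nv i)^2) = 1"
  shows "EE nv r = 1/3 - 6*r^2"
proof -
  have n9: "nv 9 = -(nv 1 + nv 2 + nv 3 + nv 4 + nv 5 + nv 6 + nv 7 + nv 8)" using assms(1) unfolding sum19 by linarith
  have S2: "nv 1^2+nv 2^2+nv 3^2+nv 4^2+nv 5^2+nv 6^2+nv 7^2+nv 8^2+nv 9^2 = 1" using assms(2) unfolding sum19 .
  show ?thesis
    using E2id[OF sq_facts(1-3) n9, of r] unfolding EE_def S2
    unfolding pd0_def pd1_def pd2_def pu1_def pv1_def pw1_def by simp
qed

lemma DD_eq: fixes nv :: "nat \<Rightarrow> real"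
  assumes "(\<Sum>i\<in>{1..9}. nv i) = 0" "(\<Sum>i\<in>{1..9}. (nv i)^2) = 1"
  shows "DD nv r = 2*(4*r^3*Ffun nv - r^2 + 1/54)"
proof -
  have n9: "nv 9 = -(nv 1 + nv 2 + nv 3 + nv 4 + nv 5 + nv 6 + nv 7 + nv 8)" using assms(1) unfolding sum19 by linarith
  have S2: "nv 1^2+nv 2^2+nv 3^2+nv 4^2+nv 5^2+nv 6^2+nv 7^2+nv 8^2+nv 9^2 = 1" using assms(2) unfolding sum19 .
  have "DD nv r = 1/27 - 2*r^2 + 8*r^3*Fpoly nv"
    using Did[OF sq_facts n9, of r] unfolding DD_def S2 Fpoly_def
    unfolding pd0_def pd1_def pd2_def pu1_def pv1_def pw1_def by simp
  then show ?thesis unfolding Ffun_eq by (simp add: algebra_simps)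
qed



lemma QR_affine_gen:
  fixes r r' D0 D1 D2 U1 U2 V1 V2 W1 W2 :: real
  shows "r * QR (1/3 + r'*D0) (1/3 + r'*D1) (1/3 + r'*D2) (r'*U1) (r'*U2) (r'*V1) (r'*V2) (r'*W1) (r'*W2) a0 b0 a1 b1 a2 b2
   = (r - r') * ((a0^2+b0^2+a1^2+b1^2+a2^2+b2^2)/3)
     + r' * QR (1/3 + r*D0) (1/3 + r*D1) (1/3 + r*D2) (r*U1) (r*U2) (r*V1) (r*V2) (r*W1) (r*W2) a0 b0 a1 b1 a2 b2"
  unfolding QR_def by (simp add: field_simps)

lemma pforms: fixes nv :: "nat \<Rightarrow> real" shows
  "pd0 nv r = 1/3 + r*(2*(nv 4 + nv 5 + nv 6 + nv 7 + nv 8 + nv 9))"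
  "pd1 nv r = 1/3 + r*(2*(nv 1 + nv 2 + nv 3 + nv 7 + nv 8 + nv 9))"
  "pd2 nv r = 1/3 + r*(2*(nv 1 + nv 2 + nv 3 + nv 4 + nv 5 + nv 6))"
  "pu1 nv r = r*(-2*(nv 7 - (nv 8 + nv 9)/2))"
  "pu2 nv r = r*(- sqrt 3 * (nv 9 - nv 8))"
  "pv1 nv r = r*(-2*(nv 4 - (nv 5 + nv 6)/2))"
  "pv2 nv r = r*(- sqrt 3 * (nv 5 - nv 6))"
  "pw1 nv r = r*(-2*(nv 1 - (nv 2 + nv 3)/2))"
  "pw2 nv r = r*(- sqrt 3 * (nv 3 - nv 2))"
  unfolding pdefs by (simp_all add: algebra_simps)

lemma QR_affine:
  fixes nv :: "nat \<Rightarrow> real"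
  shows "r * QR (pd0 nv r') (pd1 nv r') (pd2 nv r') (pu1 nv r') (pu2 nv r') (pv1 nv r') (pv2 nv r') (pw1 nv r') (pw2 nv r') a0 b0 a1 b1 a2 b2
   = (r - r') * ((a0^2+b0^2+a1^2+b1^2+a2^2+b2^2)/3)
     + r' * QR (pd0 nv r) (pd1 nv r) (pd2 nv r) (pu1 nv r) (pu2 nv r) (pv1 nv r) (pv2 nv r) (pw1 nv r) (pw2 nv r) a0 b0 a1 b1 a2 b2"
  unfolding pforms by (rule QR_affine_gen)

lemma PS_convex:
  fixes nv :: "nat \<Rightarrow> real"
  assumes "PS nv r" "0 \<le> r'" "r' \<le> r"
  shows "PS nv r'"
  unfolding PS_def PSDR_def
proof (intro allI)
  fix a0 b0 a1 b1 a2 b2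
  have h: "0 \<le> QR (pd0 nv r) (pd1 nv r) (pd2 nv r) (pu1 nv r) (pu2 nv r) (pv1 nv r) (pv2 nv r) (pw1 nv r) (pw2 nv r) a0 b0 a1 b1 a2 b2"
    using assms(1) unfolding PS_def PSDR_def by blast
  show "0 \<le> QR (pd0 nv r') (pd1 nv r') (pd2 nv r') (pu1 nv r') (pu2 nv r') (pv1 nv r') (pv2 nv r') (pw1 nv r') (pw2 nv r') a0 b0 a1 b1 a2 b2"
  proof (cases "r' = 0")
    case True
    then show ?thesis unfolding QR_def pdefs by simp
  next
    case False
    then have r: "r > 0" using assms by linarith
    have "0 \<le> (r - r') * ((a0^2+b0^2+a1^2+b1^2+a2^2+b2^2)/3)
     + r' * QR (pd0 nv r) (pd1 nv r) (pd2 nv r) (pu1 nv r) (pu2 nv r) (pv1 nv r) (pv2 nv r) (pw1 nv r) (pw2 nv r) a0 b0 a1 b1 a2 b2"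
      using assms h by (intro add_nonneg_nonneg mult_nonneg_nonneg) auto
    then have "0 \<le> r * QR (pd0 nv r') (pd1 nv r') (pd2 nv r') (pu1 nv r') (pu2 nv r') (pv1 nv r') (pv2 nv r') (pw1 nv r') (pw2 nv r') a0 b0 a1 b1 a2 b2"
      using QR_affine[of r nv r' a0 b0 a1 b1 a2 b2] by linarith
    then show ?thesis using r by (simp add: zero_le_mult_iff)
  qed
qed



theorem mainTheorem9:
  fixes nv :: "nat \<Rightarrow> real"
  assumes "(\<Sum>i\<in>{1..9}. nv i) = 0"
      and "(\<Sum>i\<in>{1..9}. (nv i)^2) = 1"
  shows "\<exists>r0 > 0.
           4 * r0^3 * Ffun nv - r0^2 + 1/54 = 0 \<and>
           (\<forall>r. 0 < r \<and> r < r0 \<longrightarrow> 4 * r^3 * Ffun nv - r^2 + 1/54 \<noteq> 0) \<and>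
           {r. 0 \<le> r \<and> density_op (rho nv r)} = {0..r0} \<and>
           (Ffun nv = 0 \<longrightarrow> r0 = 1 / (3 * sqrt 6)) \<and>
           (Ffun nv = 1 / sqrt 2 \<longrightarrow> r0 = 1 / (3 * sqrt 2)) \<and>
           (Ffun nv = - 1 / sqrt 2 \<longrightarrow> r0 = 1 / (6 * sqrt 2)) \<and>
           1 / (6 * sqrt 2) \<le> r0 \<and> r0 \<le> 1 / (3 * sqrt 2)"
proof -
  define F where "F = Ffun nv"
  define g where "g = (\<lambda>r::real. 4 * r^3 * F - r^2 + 1/54)"
  define s :: real where "s = 1/(3*sqrt 2)"
  define c :: real where "c = 1/sqrt 2"
  have s0: "s > 0" unfolding s_def by simp
  have c0: "c > 0" unfolding c_def by simp
  have sq2: "sqrt 2 * sqrt 2 = (2::real)" by simp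
  have cs: "c*s = 1/6" unfolding c_def s_def using sq2 by (simp add: field_simps)
  have ss: "s^2 = 1/18" unfolding s_def using sq2 by (simp add: field_simps power2_eq_square)
  have c3: "4*s^3*c = 1/27"
  proof -
    have "4*s^3*c = 4*(s^2)*(c*s)" by (simp add: power2_eq_square power3_eq_cube algebra_simps)
    then show ?thesis using ss cs by simp
  qed
  have s3pos: "s^3 > 0" using s0 by simp
  have dens: "density_op (rho nv r) \<longleftrightarrow> PS nv r" for r using density_rho[OF assms(1)] .
  have EEr: "EE nv r = 1/3 - 6*r^2" for r using EE_eq[OF assms] .
  have DDr: "DD nv r = 2 * g r" for r using DD_eq[OF assms] unfolding g_def F_def .
  have tr: "pd0 nv r + pd1 nv r + pd2 nv r = 1" for r using trace_p[OF assms(1)] .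
  have L4r: "EE nv r = 0 \<Longrightarrow> DD nv r \<le> 0" for r
    unfolding EE_def DD_def by (rule L4) (use tr in simp)
  have gs: "g s \<le> 0" using L4r[of s] EEr[of s] DDr[of s] ss by simp
  have gms: "g (-s) \<le> 0" using L4r[of "-s"] EEr[of "-s"] DDr[of "-s"] ss by simp
  have Fle: "F \<le> c"
  proof -
    have "g s = 4*s^3*F - s^2 + 1/54" unfolding g_def by simp
    then have "4*s^3*F \<le> 4*s^3*c" using gs c3 ss by linarith
    then have "s^3*F \<le> s^3*c" by linarith
    then show ?thesis using mult_le_cancel_left_pos[OF s3pos] by blast
  qed
  have Fge: "-c \<le> F"
  proof -
    have "g (-s) = -(4*s^3*F) - s^2 + 1/54" unfolding g_def by (simp add: power3_eq_cube power2_eq_square)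
    then have "-(4*s^3*F) \<le> 4*s^3*c" using gms c3 ss by linarith
    then have "s^3*(-c) \<le> s^3*F" by linarith
    then show ?thesis using mult_le_cancel_left_pos[OF s3pos] by blast
  qed
  have mono: "g b < g a" if "0 \<le> a" "a < b" "b \<le> s" for a b
    using gmono[OF cs s0 c0 Fle that] unfolding g_def by simp
  have g0: "g 0 = 1/54" unfolding g_def by simp
  have cont: "\<forall>x. 0 \<le> x \<and> x \<le> s \<longrightarrow> isCont g x" unfolding g_def by (intro allI impI) (intro continuous_intros)
  obtain r0 where r0: "0 \<le> r0" "r0 \<le> s" "g r0 = 0"
    using IVT2[of g s 0 0, OF gs _ _ cont] g0 s0 by auto
  have r0pos: "r0 > 0" using r0 g0 by (cases "r0 = 0") auto
  have gs2: "g (s/2) \<ge> 0"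
  proof -
    have e: "g (s/2) = (s^3*F)/2 + 1/216 - (s^2/4 - 1/72)"
      unfolding g_def by (simp add: power2_eq_square power3_eq_cube field_simps)
    have m: "s^3*(-c) \<le> s^3*F" using mult_left_mono[OF Fge, of "s^3"] s3pos by simp
    have z: "(s^3*(-c))/2 + 1/216 = 0" using c3 by simp
    show ?thesis using e m z ss by linarith
  qed
  have low: "s/2 \<le> r0"
  proof (rule ccontr)
    assume "\<not> s/2 \<le> r0"
    then have "g (s/2) < g r0" using mono[of r0 "s/2"] r0 s0 by simp
    then show False using gs2 r0 by simp
  qed
  have uniq: "x = r0" if "0 \<le> x" "x \<le> s" "g x = 0" for x
  proof (rule ccontr)
    assume "x \<noteq> r0"
    then consider "x < r0" | "r0 < x" by linarith
    then show False
    proof cases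
      case 1 then show False using mono[of x r0] that r0 by simp
    next
      case 2 then show False using mono[of r0 x] that r0 by simp
    qed
  qed
  have pos_below: "g r > 0" if "0 \<le> r" "r < r0" for r
    using mono[of r r0] that r0 by simp
  have nonneg_below: "g r \<ge> 0" if "0 \<le> r" "r \<le> r0" for r
    using pos_below[of r] that r0 by (cases "r = r0") auto
  have PSDRiff: "PS nv r \<Longrightarrow> EE nv r \<ge> 0" for r unfolding PS_def EE_def by (rule L2)
  have PS3: "PS nv r \<Longrightarrow> EE nv r > 0 \<Longrightarrow> DD nv r \<ge> 0" for r unfolding PS_def EE_def DD_def by (rule L3)
  have set: "{r. 0 \<le> r \<and> density_op (rho nv r)} = {0..r0}"
  proof (intro equalityI subsetI)
    fix r assume "r \<in> {0..r0}"
    then have r: "0 \<le> r" "r \<le> r0" by auto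
    have "r^2 \<le> s^2" using r r0 by (intro power_mono) auto
    then have E: "EE nv r \<ge> 0" using EEr[of r] ss by simp
    have D: "DD nv r \<ge> 0" using DDr[of r] nonneg_below[OF r] by simp
    have "PS nv r" unfolding PS_def PSDR_def
      by (intro allI L1) (use tr[of r] E D in \<open>auto simp: EE_def DD_def\<close>)
    then show "r \<in> {r. 0 \<le> r \<and> density_op (rho nv r)}" using r dens by auto
  next
    fix r assume "r \<in> {r. 0 \<le> r \<and> density_op (rho nv r)}"
    then have r: "0 \<le> r" and P: "PS nv r" using dens by auto
    show "r \<in> {0..r0}"
    proof (rule ccontr)
      assume "r \<notin> {0..r0}"
      then have rr: "r0 < r" using r by auto
      show False
      proof (cases "r \<le> s")
        case False
        then have "s^2 < r^2" using s0 by (intro power_strict_mono) auto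
        then have "EE nv r < 0" using EEr[of r] ss by simp
        then show False using PSDRiff[OF P] by simp
      next
        case True
        define r' where "r' = (r0 + r)/2"
        have r': "r0 < r'" "r' < r" "0 \<le> r'" using rr r0 unfolding r'_def by auto
        have P': "PS nv r'" using PS_convex[OF P] r' by simp
        have "r'^2 < s^2" using r' True s0 by (intro power_strict_mono) auto
        then have E: "EE nv r' > 0" using EEr[of r'] ss by simp
        have "g r' < g r0" using mono[of r0 r'] r' r0 True by simp
        then have "DD nv r' < 0" using DDr[of r'] r0 by simp
        then show False using PS3[OF P' E] by simp
      qed
    qed
  qed
  have e1: "1/(3*sqrt 2) = s" unfolding s_def ..
  have e2: "1/(6*sqrt 2) = s/2" unfolding s_def by simp
  have case0: "F = 0 \<Longrightarrow> r0 = 1/(3*sqrt 6)"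
  proof -
    assume "F = 0"
    then have "r0^2 = 1/54" using r0 unfolding g_def by simp
    moreover have "(1/(3*sqrt 6))^2 = (1/54::real)" by (simp add: power2_eq_square field_simps)
    ultimately have "r0^2 = (1/(3*sqrt 6))^2" by simp
    then show ?thesis using r0pos by (simp add: power2_eq_iff_nonneg)
  qed
  have case1: "F = 1/sqrt 2 \<Longrightarrow> r0 = 1/(3*sqrt 2)"
  proof -
    assume "F = 1/sqrt 2"
    then have "F = c" unfolding c_def .
    then have "g s = 0" unfolding g_def using c3 ss by simp
    then show ?thesis using uniq[of s] s0 e1 by simp
  qed
  have case2: "F = -1/sqrt 2 \<Longrightarrow> r0 = 1/(6*sqrt 2)"
  proof -
    assume "F = -1/sqrt 2"
    then have "F = -c" unfolding c_def by simp
    have "g (s/2) = (s^3*F)/2 + 1/216 - (s^2/4 - 1/72)"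
      unfolding g_def by (simp add: power2_eq_square power3_eq_cube field_simps)
    also have "\<dots> = 0" using ss c3 \<open>F = -c\<close> by simp
    finally show ?thesis using uniq[of "s/2"] s0 e2 by simp
  qed
  show ?thesis
  proof (intro exI[of _ r0] conjI)
    show "r0 > 0" by (rule r0pos)
    show "4 * r0^3 * Ffun nv - r0^2 + 1/54 = 0" using r0 unfolding g_def F_def by simp
    show "\<forall>r. 0 < r \<and> r < r0 \<longrightarrow> 4 * r^3 * Ffun nv - r^2 + 1/54 \<noteq> 0"
    proof (intro allI impI)
      fix r :: real assume "0 < r \<and> r < r0"
      then have "g r > 0" using pos_below by simp
      then show "4 * r^3 * Ffun nv - r^2 + 1/54 \<noteq> 0" unfolding g_def F_def by simp
    qed
    show "{r. 0 \<le> r \<and> density_op (rho nv r)} = {0..r0}" by (rule set)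
    show "Ffun nv = 0 \<longrightarrow> r0 = 1 / (3 * sqrt 6)" using case0 unfolding F_def by simp
    show "Ffun nv = 1 / sqrt 2 \<longrightarrow> r0 = 1 / (3 * sqrt 2)" using case1 unfolding F_def by simp
    show "Ffun nv = - 1 / sqrt 2 \<longrightarrow> r0 = 1 / (6 * sqrt 2)" using case2 unfolding F_def by simp
    show "1 / (6 * sqrt 2) \<le> r0" using low e2 by simp
    show "r0 \<le> 1 / (3 * sqrt 2)" using r0 e1 by simp
  qed
qed


end
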